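(* For every $a\in C\ell_{1,2}$, $L(a^+)=L(a)^+$ and $R(a^+)=R(a)^+$, where on the right-hand sides $M^+$ denotes the Moore–Penrose inverse of a real matrix $M$.
   Context: $C\ell_{1,2}$ is the real Clifford algebra generated by $i_1,i_2,i_3$ with $i_1^2=1$, $i_2^2=i_3^2=-1$ and $i_ti_m=-i_mi_t$ for $t\neq m$, with real basis $e_0=1$, $e_1=i_1$, $e_2=i_2$, $e_3=i_1i_2$, $e_4=i_3$, $e_5=i_1i_3$, $e_6=i_2i_3$, $e_7=i_1i_2i_3$. For $x=\sum_{t=0}^7x_te_t$ write $\overrightarrow{x}=(x_0,\dots,x_7)^T$. $L(a)$, $R(a)$ are the real $8\times8$ matrices with $\overrightarrow{ax}=L(a)\overrightarrow{x}$, $\overrightarrow{xa}=R(a)\overrightarrow{x}$ for all $x$. The prime of $a=\sum a_te_t$ is $a'=a_0+a_1e_1-a_2e_2+a_3e_3-a_4e_4+a_5e_5-a_6e_6-a_7e_7$. For every $a$ there is a unique $x\in C\ell_{1,2}$ with $axa=a$, $xax=x$, $(ax)'=ax$, $(xa)'=xa$, denoted $a^+$ (the Moore–Penrose inverse of $a$). *)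

theory Defs
  imports "Jordan_Normal_Form.Matrix"
begin

text \<open>Elements of Cl(1,2) are represented by their coordinate vectors
  (x_0,...,x_7) w.r.t. the basis e_0,...,e_7, i.e. by real vectors of dimension 8.
  The basis element e_t is the product of the generators i_(k+1) for those k < 3
  with bit k of t set, in increasing order (e_3 = i1 i2, e_5 = i1 i3, e_6 = i2 i3,
  e_7 = i1 i2 i3).\<close>

definition gen_sq :: "nat \<Rightarrow> real" where
  "gen_sq k = (if k = 0 then 1 else -1)"

text \<open>e_s * e_t = clsign s t * e_(s xor t): the sign counts the anticommuting
  transpositions needed to sort the generators, times the squares of repeated generators.\<close>
definition clsign :: "nat \<Rightarrow> nat \<Rightarrow> real" where
  "clsign s t =
     (-1) ^ card {(k, j). k < 3 \<and> j < 3 \<and> bit s k \<and> bit t j \<and> j < k}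
     * (\<Prod>k\<in>{k. k < 3 \<and> bit s k \<and> bit t k}. gen_sq k)"

definition cl_mult :: "real vec \<Rightarrow> real vec \<Rightarrow> real vec" where
  "cl_mult x y = vec 8 (\<lambda>r. \<Sum>s<8. \<Sum>t<8.
      (if xor s t = r then clsign s t * (x $ s) * (y $ t) else 0))"

definition prime_sign :: "nat \<Rightarrow> real" where
  "prime_sign t = [1, 1, -1, 1, -1, 1, -1, -1] ! t"

definition cl_prime :: "real vec \<Rightarrow> real vec" where
  "cl_prime x = vec 8 (\<lambda>t. prime_sign t * (x $ t))"

definition Lmat :: "real vec \<Rightarrow> real mat" where
  "Lmat a = (THE M. M \<in> carrier_mat 8 8 \<and> (\<forall>x\<in>carrier_vec 8. M *\<^sub>v x = cl_mult a x))"

definition Rmat :: "real vec \<Rightarrow> real mat" where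
  "Rmat a = (THE M. M \<in> carrier_mat 8 8 \<and> (\<forall>x\<in>carrier_vec 8. M *\<^sub>v x = cl_mult x a))"

definition cl_mp :: "real vec \<Rightarrow> real vec" where
  "cl_mp a = (THE x. x \<in> carrier_vec 8 \<and> cl_mult (cl_mult a x) a = a
       \<and> cl_mult (cl_mult x a) x = x
       \<and> cl_prime (cl_mult a x) = cl_mult a x \<and> cl_prime (cl_mult x a) = cl_mult x a)"

definition mat_mp :: "real mat \<Rightarrow> real mat" where
  "mat_mp M = (THE X. X \<in> carrier_mat (dim_col M) (dim_row M)
       \<and> M * X * M = M \<and> X * M * X = X
       \<and> (M * X)\<^sup>T = M * X \<and> (X * M)\<^sup>T = X * M)"

end

theory Submission
  imports Defs
begin

lemma bit_Suc0: "bit (Suc 0) k \<longleftrightarrow> k = 0"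
  by (metis One_nat_def bit_1_iff)
lemma l3: "{..<3::nat} = {0,1,2}" by auto
lemma sfl: "Set.filter P (set xs) = set (filter P xs)" by auto
lemma set33: "{(k::nat, j::nat). k < 3 \<and> j < 3 \<and> P k j} = set (filter (\<lambda>(k,j). P k j) [(0,0),(0,1),(0,2),(1,0),(1,1),(1,2),(2,0),(2,1),(2,2)])"
proof -
  have "{(k::nat, j::nat). k < 3 \<and> j < 3 \<and> P k j} = Set.filter (\<lambda>(k,j). P k j) ({..<3} \<times> {..<3})"
    by auto
  also have "{..<3::nat} \<times> {..<3::nat} = set [(0,0),(0,1),(0,2),(1,0),(1,1),(1,2),(2,0),(2,1),(2,2)]"
    unfolding l3 by simp
  finally show ?thesis unfolding sfl .
qed
lemma set3: "{k::nat. k < 3 \<and> Q k} = set (filter Q [0,1,2])"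
proof -
  have "{k::nat. k < 3 \<and> Q k} = Set.filter Q {..<3}" by auto
  also have "{..<3::nat} = set [0,1,2]" unfolding l3 by simp
  finally show ?thesis unfolding sfl .
qed

lemma clsign_tab:
  "clsign 0 0 = 1"
  "clsign 0 1 = 1"
  "clsign 0 2 = 1"
  "clsign 0 3 = 1"
  "clsign 0 4 = 1"
  "clsign 0 5 = 1"
  "clsign 0 6 = 1"
  "clsign 0 7 = 1"
  "clsign 1 0 = 1"
  "clsign 1 1 = 1"
  "clsign 1 2 = 1"
  "clsign 1 3 = 1"
  "clsign 1 4 = 1"
  "clsign 1 5 = 1"
  "clsign 1 6 = 1"
  "clsign 1 7 = 1"
  "clsign 2 0 = 1"
  "clsign 2 1 = -1"
  "clsign 2 2 = -1"
  "clsign 2 3 = 1"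
  "clsign 2 4 = 1"
  "clsign 2 5 = -1"
  "clsign 2 6 = -1"
  "clsign 2 7 = 1"
  "clsign 3 0 = 1"
  "clsign 3 1 = -1"
  "clsign 3 2 = -1"
  "clsign 3 3 = 1"
  "clsign 3 4 = 1"
  "clsign 3 5 = -1"
  "clsign 3 6 = -1"
  "clsign 3 7 = 1"
  "clsign 4 0 = 1"
  "clsign 4 1 = -1"
  "clsign 4 2 = -1"
  "clsign 4 3 = 1"
  "clsign 4 4 = -1"
  "clsign 4 5 = 1"
  "clsign 4 6 = 1"
  "clsign 4 7 = -1"
  "clsign 5 0 = 1"
  "clsign 5 1 = -1"
  "clsign 5 2 = -1"
  "clsign 5 3 = 1"
  "clsign 5 4 = -1"
  "clsign 5 5 = 1"
  "clsign 5 6 = 1"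
  "clsign 5 7 = -1"
  "clsign 6 0 = 1"
  "clsign 6 1 = 1"
  "clsign 6 2 = 1"
  "clsign 6 3 = 1"
  "clsign 6 4 = -1"
  "clsign 6 5 = -1"
  "clsign 6 6 = -1"
  "clsign 6 7 = -1"
  "clsign 7 0 = 1"
  "clsign 7 1 = 1"
  "clsign 7 2 = 1"
  "clsign 7 3 = 1"
  "clsign 7 4 = -1"
  "clsign 7 5 = -1"
  "clsign 7 6 = -1"
  "clsign 7 7 = -1"
  unfolding clsign_def set33 set3 by (simp_all add: gen_sq_def card_set bit_Suc0)

lemma prime_sign_tab:
  "prime_sign 0 = 1"
  "prime_sign 1 = 1"
  "prime_sign 2 = -1"
  "prime_sign 3 = 1"
  "prime_sign 4 = -1"
  "prime_sign 5 = 1"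
  "prime_sign 6 = -1"
  "prime_sign 7 = -1"
  by (simp_all add: prime_sign_def)

lemma sum8: "(\<Sum>s<(8::nat). f s) = f 0 + f 1 + f 2 + f 3 + f 4 + f 5 + f 6 + (f 7 :: real)"
  by (simp add: eval_nat_numeral)
lemma less8D: "(i::nat) < 8 \<Longrightarrow> i = 0 \<or> i = 1 \<or> i = 2 \<or> i = 3 \<or> i = 4 \<or> i = 5 \<or> i = 6 \<or> i = 7"
  by auto

lemma cm:
  "cl_mult x y $ 0 = x $ 0 * y $ 0 + x $ 1 * y $ 1 - x $ 2 * y $ 2 + x $ 3 * y $ 3 - x $ 4 * y $ 4 + x $ 5 * y $ 5 - x $ 6 * y $ 6 - x $ 7 * y $ 7"
  "cl_mult x y $ 1 = x $ 0 * y $ 1 + x $ 1 * y $ 0 + x $ 2 * y $ 3 - x $ 3 * y $ 2 + x $ 4 * y $ 5 - x $ 5 * y $ 4 - x $ 6 * y $ 7 - x $ 7 * y $ 6"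
  "cl_mult x y $ 2 = x $ 0 * y $ 2 + x $ 1 * y $ 3 + x $ 2 * y $ 0 - x $ 3 * y $ 1 + x $ 4 * y $ 6 - x $ 5 * y $ 7 - x $ 6 * y $ 4 - x $ 7 * y $ 5"
  "cl_mult x y $ 3 = x $ 0 * y $ 3 + x $ 1 * y $ 2 - x $ 2 * y $ 1 + x $ 3 * y $ 0 - x $ 4 * y $ 7 + x $ 5 * y $ 6 - x $ 6 * y $ 5 - x $ 7 * y $ 4"
  "cl_mult x y $ 4 = x $ 0 * y $ 4 + x $ 1 * y $ 5 - x $ 2 * y $ 6 + x $ 3 * y $ 7 + x $ 4 * y $ 0 - x $ 5 * y $ 1 + x $ 6 * y $ 2 + x $ 7 * y $ 3"
  "cl_mult x y $ 5 = x $ 0 * y $ 5 + x $ 1 * y $ 4 + x $ 2 * y $ 7 - x $ 3 * y $ 6 - x $ 4 * y $ 1 + x $ 5 * y $ 0 + x $ 6 * y $ 3 + x $ 7 * y $ 2"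
  "cl_mult x y $ 6 = x $ 0 * y $ 6 + x $ 1 * y $ 7 + x $ 2 * y $ 4 - x $ 3 * y $ 5 - x $ 4 * y $ 2 + x $ 5 * y $ 3 + x $ 6 * y $ 0 + x $ 7 * y $ 1"
  "cl_mult x y $ 7 = x $ 0 * y $ 7 + x $ 1 * y $ 6 - x $ 2 * y $ 5 + x $ 3 * y $ 4 + x $ 4 * y $ 3 - x $ 5 * y $ 2 + x $ 6 * y $ 1 + x $ 7 * y $ 0"
  by (simp_all add: cl_mult_def sum8 clsign_tab clsign_tab[unfolded One_nat_def])

lemma dim_cm[simp]: "dim_vec (cl_mult x y) = 8" "cl_mult x y \<in> carrier_vec 8"
  by (auto simp: cl_mult_def)
lemma cp: "cl_prime x $ 0 = x $ 0" "cl_prime x $ 1 = x $ 1" "cl_prime x $ 2 = - x $ 2" "cl_prime x $ 3 = x $ 3"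
  "cl_prime x $ 4 = - x $ 4" "cl_prime x $ 5 = x $ 5" "cl_prime x $ 6 = - x $ 6" "cl_prime x $ 7 = - x $ 7"
  by (simp_all add: cl_prime_def prime_sign_tab prime_sign_tab[unfolded One_nat_def])
lemma dim_cp[simp]: "dim_vec (cl_prime x) = 8" "cl_prime x \<in> carrier_vec 8"
  by (auto simp: cl_prime_def)
lemma less8_cases: "(i::nat) < 8 \<Longrightarrow> P 0 \<Longrightarrow> P 1 \<Longrightarrow> P 2 \<Longrightarrow> P 3 \<Longrightarrow> P 4 \<Longrightarrow> P 5 \<Longrightarrow> P 6 \<Longrightarrow> P 7 \<Longrightarrow> P i"
  by (auto dest!: less8D)

lemma cl_assoc: "cl_mult (cl_mult x y) z = cl_mult x (cl_mult y z)"
proof (rule eq_vecI)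
  fix i assume "i < dim_vec (cl_mult x (cl_mult y z))"
  then have "i < 8" by simp
  then show "cl_mult (cl_mult x y) z $ i = cl_mult x (cl_mult y z) $ i"
    by (rule less8_cases; simp only: cm; simp add: algebra_simps)
qed simp

lemma cl_prime_anti: "cl_prime (cl_mult x y) = cl_mult (cl_prime y) (cl_prime x)"
proof (rule eq_vecI)
  fix i assume "i < dim_vec (cl_mult (cl_prime y) (cl_prime x))"
  then have "i < 8" by simp
  then show "cl_prime (cl_mult x y) $ i = cl_mult (cl_prime y) (cl_prime x) $ i"
    by (rule less8_cases; simp only: cm cp; simp add: algebra_simps)
qed simp

lemma cl_prime_prime: assumes "x \<in> carrier_vec 8" shows "cl_prime (cl_prime x) = x"
proof (rule eq_vecI)
  fix i assume "i < dim_vec x"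
  then have "i < 8" using assms by simp
  then show "cl_prime (cl_prime x) $ i = x $ i"
    by (rule less8_cases; simp only: cp; simp)
qed (use assms in simp)

lemma smult_comp: "x \<in> carrier_vec 8 \<Longrightarrow> i < 8 \<Longrightarrow> (c \<cdot>\<^sub>v x) $ i = c * x $ i"
  by simp

lemma cl_prime_smult: assumes "x \<in> carrier_vec 8" shows "cl_prime (c \<cdot>\<^sub>v x) = c \<cdot>\<^sub>v cl_prime x"
proof (rule eq_vecI)
  fix i assume "i < dim_vec (c \<cdot>\<^sub>v cl_prime x)"
  then have i: "i < 8" by simp
  have cx: "c \<cdot>\<^sub>v x \<in> carrier_vec 8" using assms by simp
  from i show "cl_prime (c \<cdot>\<^sub>v x) $ i = (c \<cdot>\<^sub>v cl_prime x) $ i"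
    by (rule less8_cases; simp only: cp smult_comp[OF assms] smult_comp[OF dim_cp(2)]; simp)
qed simp

lemma cl_mult_smult_left: assumes "x \<in> carrier_vec 8" shows "cl_mult (c \<cdot>\<^sub>v x) y = c \<cdot>\<^sub>v cl_mult x y"
proof (rule eq_vecI)
  fix i assume "i < dim_vec (c \<cdot>\<^sub>v cl_mult x y)"
  then have i: "i < 8" by simp
  from i show "cl_mult (c \<cdot>\<^sub>v x) y $ i = (c \<cdot>\<^sub>v cl_mult x y) $ i"
    by (rule less8_cases; simp only: cm smult_comp[OF assms] smult_comp[OF dim_cm(2)]; simp add: algebra_simps)
qed simp

lemma cl_mult_smult_right: assumes "y \<in> carrier_vec 8" shows "cl_mult x (c \<cdot>\<^sub>v y) = c \<cdot>\<^sub>v cl_mult x y"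
proof (rule eq_vecI)
  fix i assume "i < dim_vec (c \<cdot>\<^sub>v cl_mult x y)"
  then have i: "i < 8" by simp
  from i show "cl_mult x (c \<cdot>\<^sub>v y) $ i = (c \<cdot>\<^sub>v cl_mult x y) $ i"
    by (rule less8_cases; simp only: cm smult_comp[OF assms] smult_comp[OF dim_cm(2)]; simp add: algebra_simps)
qed simp

definition Nv :: "real \<Rightarrow> real \<Rightarrow> real vec" where
  "Nv p q = vec 8 (\<lambda>i. if i = 0 then p else if i = 7 then q else 0)"
lemma dim_Nv[simp]: "dim_vec (Nv p q) = 8" "Nv p q \<in> carrier_vec 8" by (auto simp: Nv_def)
lemma nv: "Nv p q $ 0 = p" "Nv p q $ 1 = 0" "Nv p q $ 2 = 0" "Nv p q $ 3 = 0" "Nv p q $ 4 = 0"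
  "Nv p q $ 5 = 0" "Nv p q $ 6 = 0" "Nv p q $ 7 = q"
  by (simp_all add: Nv_def)

definition cconj :: "real vec \<Rightarrow> real vec" where
  "cconj x = vec 8 (\<lambda>t. if t = 0 \<or> t = 7 then x $ t else - x $ t)"
lemma dim_cc[simp]: "dim_vec (cconj x) = 8" "cconj x \<in> carrier_vec 8" by (auto simp: cconj_def)
lemma cc: "cconj x $ 0 = x $ 0" "cconj x $ 1 = - x $ 1" "cconj x $ 2 = - x $ 2" "cconj x $ 3 = - x $ 3"
  "cconj x $ 4 = - x $ 4" "cconj x $ 5 = - x $ 5" "cconj x $ 6 = - x $ 6" "cconj x $ 7 = x $ 7"
  by (simp_all add: cconj_def)

definition nz :: "real vec \<Rightarrow> real" where
  "nz a = a $ 0 * a $ 0 - a $ 1 * a $ 1 + a $ 2 * a $ 2 - a $ 3 * a $ 3 + a $ 4 * a $ 4 - a $ 5 * a $ 5 + a $ 6 * a $ 6 - a $ 7 * a $ 7"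
definition ns :: "real vec \<Rightarrow> real" where
  "ns a = 2 * a $ 0 * a $ 7 - 2 * a $ 1 * a $ 6 + 2 * a $ 2 * a $ 5 - 2 * a $ 3 * a $ 4"
definition nrm :: "real vec \<Rightarrow> real" where
  "nrm a = a $ 0 * a $ 0 + a $ 1 * a $ 1 + a $ 2 * a $ 2 + a $ 3 * a $ 3 + a $ 4 * a $ 4 + a $ 5 * a $ 5 + a $ 6 * a $ 6 + a $ 7 * a $ 7"

lemma a_cconj: "cl_mult a (cconj a) = Nv (nz a) (ns a)"
proof (rule eq_vecI)
  fix i assume "i < dim_vec (Nv (nz a) (ns a))"
  then have i: "i < 8" by simp
  from i show "cl_mult a (cconj a) $ i = Nv (nz a) (ns a) $ i"
    by (rule less8_cases; simp only: cm cc nv nz_def ns_def; simp add: algebra_simps)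
qed simp

lemma cconj_a: "cl_mult (cconj a) a = Nv (nz a) (ns a)"
proof (rule eq_vecI)
  fix i assume "i < dim_vec (Nv (nz a) (ns a))"
  then have i: "i < 8" by simp
  from i show "cl_mult (cconj a) a $ i = Nv (nz a) (ns a) $ i"
    by (rule less8_cases; simp only: cm cc nv nz_def ns_def; simp add: algebra_simps)
qed simp

lemma Nv_central: "cl_mult (Nv p q) y = cl_mult y (Nv p q)"
proof (rule eq_vecI)
  fix i assume "i < dim_vec (cl_mult y (Nv p q))"
  then have i: "i < 8" by simp
  from i show "cl_mult (Nv p q) y $ i = cl_mult y (Nv p q) $ i"
    by (rule less8_cases; simp only: cm nv; simp add: algebra_simps)
qed simp

lemma Nv_mult: "cl_mult (Nv p q) (Nv p (- q)) = Nv (p * p + q * q) 0"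
proof (rule eq_vecI)
  fix i assume "i < dim_vec (Nv (p * p + q * q) 0)"
  then have i: "i < 8" by simp
  from i show "cl_mult (Nv p q) (Nv p (- q)) $ i = Nv (p * p + q * q) 0 $ i"
    by (rule less8_cases; simp only: cm nv; simp add: algebra_simps)
qed simp

lemma Nv_smult: "c \<cdot>\<^sub>v Nv p q = Nv (c * p) (c * q)"
  by (rule eq_vecI) (auto simp: Nv_def)

lemma one_left: assumes "y \<in> carrier_vec 8" shows "cl_mult (Nv 1 0) y = y"
proof (rule eq_vecI)
  fix i assume "i < dim_vec y"
  then have i: "i < 8" using assms by simp
  from i show "cl_mult (Nv 1 0) y $ i = y $ i"
    by (rule less8_cases; simp only: cm nv; simp)
qed (use assms in simp)

lemma one_right: assumes "y \<in> carrier_vec 8" shows "cl_mult y (Nv 1 0) = y"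
proof (rule eq_vecI)
  fix i assume "i < dim_vec y"
  then have i: "i < 8" using assms by simp
  from i show "cl_mult y (Nv 1 0) $ i = y $ i"
    by (rule less8_cases; simp only: cm nv; simp)
qed (use assms in simp)

lemma prime_one: "cl_prime (Nv 1 0) = Nv 1 0"
proof (rule eq_vecI)
  fix i assume "i < dim_vec (Nv 1 0)"
  then have i: "i < 8" by simp
  from i show "cl_prime (Nv 1 0) $ i = Nv 1 0 $ i"
    by (rule less8_cases; simp only: cp nv; simp)
qed simp

lemma rank_one_comp: "i < 8 \<Longrightarrow> cl_mult (cl_mult a (cl_prime a)) a $ i =
  2 * nrm a * a $ i - nz a * [a $ 0, - a $ 1, a $ 2, - a $ 3, a $ 4, - a $ 5, a $ 6, - a $ 7] ! i
   - ns a * [a $ 7, - a $ 6, a $ 5, - a $ 4, - a $ 3, a $ 2, - a $ 1, a $ 0] ! i"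
  by (rule less8_cases; simp only: cm cp nz_def ns_def nrm_def; simp add: algebra_simps)

lemma rank_one: assumes "a \<in> carrier_vec 8" "nz a = 0" "ns a = 0"
  shows "cl_mult (cl_mult a (cl_prime a)) a = (2 * nrm a) \<cdot>\<^sub>v a"
proof (rule eq_vecI)
  fix i assume "i < dim_vec ((2 * nrm a) \<cdot>\<^sub>v a)"
  then have i: "i < 8" using assms by simp
  show "cl_mult (cl_mult a (cl_prime a)) a $ i = ((2 * nrm a) \<cdot>\<^sub>v a) $ i"
    using rank_one_comp[OF i, of a] assms i by simp
qed (use assms in simp)

lemma nrm_zero: assumes "a \<in> carrier_vec 8" "nrm a = 0" shows "a = 0\<^sub>v 8"
proof (rule eq_vecI)
  fix i assume "i < dim_vec (0\<^sub>v 8 :: real vec)"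
  then have i: "i < 8" by simp
  have "a $ 0 * a $ 0 + a $ 1 * a $ 1 + a $ 2 * a $ 2 + a $ 3 * a $ 3 + a $ 4 * a $ 4 + a $ 5 * a $ 5 + a $ 6 * a $ 6 + a $ 7 * a $ 7 = 0"
    using assms(2) unfolding nrm_def .
  moreover have sq: "\<And>k. 0 \<le> a $ k * a $ k" by simp
  ultimately have "\<And>k. k < 8 \<Longrightarrow> a $ k * a $ k = 0"
    using sq[of 0] sq[of 1] sq[of 2] sq[of 3] sq[of 4] sq[of 5] sq[of 6] sq[of 7]
    by (elim less8_cases) linarith+
  then have "a $ i = 0" using i by simp
  with i show "a $ i = 0\<^sub>v 8 $ i"
    by simp
qed (use assms in simp)

definition is_clmp :: "real vec \<Rightarrow> real vec \<Rightarrow> bool" where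
  "is_clmp a x \<longleftrightarrow> x \<in> carrier_vec 8 \<and> cl_mult (cl_mult a x) a = a
       \<and> cl_mult (cl_mult x a) x = x
       \<and> cl_prime (cl_mult a x) = cl_mult a x \<and> cl_prime (cl_mult x a) = cl_mult x a"

lemma clmp_unique:
  assumes x: "is_clmp a x" and y: "is_clmp a y" shows "x = y"
proof -
  from x have h1: "cl_mult a (cl_mult x a) = a" and h2: "cl_mult x (cl_mult a x) = x"
    and h3: "cl_prime (cl_mult a x) = cl_mult a x" and h4: "cl_prime (cl_mult x a) = cl_mult x a"
    unfolding is_clmp_def by (auto simp: cl_assoc)
  from y have g1: "cl_mult a (cl_mult y a) = a" and g2: "cl_mult y (cl_mult a y) = y"
    and g3: "cl_prime (cl_mult a y) = cl_mult a y" and g4: "cl_prime (cl_mult y a) = cl_mult y a"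
    unfolding is_clmp_def by (auto simp: cl_assoc)
  have A1: "cl_prime a = cl_mult (cl_prime a) (cl_mult a y)"
  proof -
    have "cl_prime a = cl_prime (cl_mult (cl_mult a y) a)" using g1 by (simp add: cl_assoc)
    also have "\<dots> = cl_mult (cl_prime a) (cl_prime (cl_mult a y))" by (rule cl_prime_anti)
    also have "\<dots> = cl_mult (cl_prime a) (cl_mult a y)" using g3 by simp
    finally show ?thesis .
  qed
  have A2: "cl_prime a = cl_mult (cl_mult x a) (cl_prime a)"
  proof -
    have "cl_prime a = cl_prime (cl_mult a (cl_mult x a))" using h1 by simp
    also have "\<dots> = cl_mult (cl_prime (cl_mult x a)) (cl_prime a)" by (rule cl_prime_anti)
    also have "\<dots> = cl_mult (cl_mult x a) (cl_prime a)" using h4 by simp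
    finally show ?thesis .
  qed
  have X: "x = cl_mult x (cl_mult a y)"
  proof -
    have "x = cl_mult x (cl_prime (cl_mult a x))" using h2 h3 by simp
    also have "\<dots> = cl_mult x (cl_mult (cl_prime x) (cl_prime a))" by (simp add: cl_prime_anti)
    also have "\<dots> = cl_mult x (cl_mult (cl_prime x) (cl_mult (cl_prime a) (cl_mult a y)))"
      by (rule arg_cong[where f="\<lambda>z. cl_mult x (cl_mult (cl_prime x) z)"]) (rule A1)
    also have "\<dots> = cl_mult x (cl_mult (cl_prime (cl_mult a x)) (cl_mult a y))"
      by (simp add: cl_prime_anti cl_assoc)
    also have "\<dots> = cl_mult x (cl_mult (cl_mult a x) (cl_mult a y))" using h3 by simp
    also have "\<dots> = cl_mult (cl_mult x (cl_mult a x)) (cl_mult a y)" by (simp add: cl_assoc)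
    also have "\<dots> = cl_mult x (cl_mult a y)" using h2 by simp
    finally show ?thesis .
  qed
  have Y: "y = cl_mult x (cl_mult a y)"
  proof -
    have "y = cl_mult (cl_mult y a) y" using g2 by (simp add: cl_assoc)
    also have "\<dots> = cl_mult (cl_prime (cl_mult y a)) y" using g4 by simp
    also have "\<dots> = cl_mult (cl_mult (cl_prime a) (cl_prime y)) y" by (simp add: cl_prime_anti)
    also have "\<dots> = cl_mult (cl_mult (cl_mult (cl_mult x a) (cl_prime a)) (cl_prime y)) y"
      by (rule arg_cong[where f="\<lambda>z. cl_mult (cl_mult z (cl_prime y)) y"]) (rule A2)
    also have "\<dots> = cl_mult (cl_mult x a) (cl_mult (cl_prime (cl_mult y a)) y)"
      by (simp add: cl_prime_anti cl_assoc)
    also have "\<dots> = cl_mult (cl_mult x a) (cl_mult (cl_mult y a) y)" using g4 by simp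
    also have "\<dots> = cl_mult x (cl_mult a y)" using g2 by (simp add: cl_assoc)
    finally show ?thesis .
  qed
  from X Y show ?thesis by simp
qed

lemma smult_eq_self: assumes "a \<in> carrier_vec 8" "k * nrm a = nrm a" shows "k \<cdot>\<^sub>v a = a"
proof (cases "nrm a = 0")
  case True
  then have "a = 0\<^sub>v 8" using nrm_zero assms by blast
  then show ?thesis by (auto intro!: eq_vecI)
next
  case False
  then have "k = 1" using assms(2) by simp
  then show ?thesis by simp
qed

lemma mpc_rank1:
  assumes a: "a \<in> carrier_vec 8" and z: "nz a = 0" "ns a = 0"
  shows "is_clmp a ((1 / (2 * nrm a)) \<cdot>\<^sub>v cl_prime a)"
proof -
  define c where "c = 1 / (2 * nrm a)"
  have pa: "cl_prime a \<in> carrier_vec 8" by simp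
  have pp: "cl_prime (cl_prime a) = a" using cl_prime_prime[OF a] .
  have r1: "cl_mult (cl_mult a (cl_prime a)) a = (2 * nrm a) \<cdot>\<^sub>v a" using rank_one[OF a z] .
  have ax: "cl_mult a (c \<cdot>\<^sub>v cl_prime a) = c \<cdot>\<^sub>v cl_mult a (cl_prime a)"
    by (rule cl_mult_smult_right[OF pa])
  have xa: "cl_mult (c \<cdot>\<^sub>v cl_prime a) a = c \<cdot>\<^sub>v cl_mult (cl_prime a) a"
    by (rule cl_mult_smult_left[OF pa])
  have e1: "cl_mult (cl_mult a (c \<cdot>\<^sub>v cl_prime a)) a = a"
  proof -
    have "cl_mult (cl_mult a (c \<cdot>\<^sub>v cl_prime a)) a = c \<cdot>\<^sub>v ((2 * nrm a) \<cdot>\<^sub>v a)"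
      unfolding ax by (simp add: cl_mult_smult_left r1)
    also have "\<dots> = (c * (2 * nrm a)) \<cdot>\<^sub>v a" by (simp add: smult_smult_assoc)
    also have "\<dots> = a" by (rule smult_eq_self[OF a]) (simp add: c_def)
    finally show ?thesis .
  qed
  have aux: "cl_mult (cl_prime a) (cl_mult a (cl_prime a)) = (2 * nrm a) \<cdot>\<^sub>v cl_prime a"
  proof -
    have "cl_prime (cl_mult (cl_mult a (cl_prime a)) a) = cl_mult (cl_prime a) (cl_mult a (cl_prime a))"
      by (simp add: cl_prime_anti pp cl_assoc)
    then show ?thesis using r1 a by (simp add: cl_prime_smult)
  qed
  have e2: "cl_mult (cl_mult (c \<cdot>\<^sub>v cl_prime a) a) (c \<cdot>\<^sub>v cl_prime a) = c \<cdot>\<^sub>v cl_prime a"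
  proof -
    have "cl_mult (cl_mult (c \<cdot>\<^sub>v cl_prime a) a) (c \<cdot>\<^sub>v cl_prime a) = c \<cdot>\<^sub>v (c \<cdot>\<^sub>v ((2 * nrm a) \<cdot>\<^sub>v cl_prime a))"
      unfolding xa by (simp add: cl_mult_smult_left cl_mult_smult_right cl_assoc aux)
    also have "\<dots> = (c * c * (2 * nrm a)) \<cdot>\<^sub>v cl_prime a" by (simp add: smult_smult_assoc mult.assoc)
    also have "c * c * (2 * nrm a) = c" by (cases "nrm a = 0") (auto simp: c_def)
    finally show ?thesis .
  qed
  have e3: "cl_prime (cl_mult a (c \<cdot>\<^sub>v cl_prime a)) = cl_mult a (c \<cdot>\<^sub>v cl_prime a)"
    unfolding ax by (simp add: cl_prime_smult cl_prime_anti pp)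
  have e4: "cl_prime (cl_mult (c \<cdot>\<^sub>v cl_prime a) a) = cl_mult (c \<cdot>\<^sub>v cl_prime a) a"
    unfolding xa by (simp add: cl_prime_smult cl_prime_anti pp)
  show ?thesis unfolding is_clmp_def c_def[symmetric] using e1 e2 e3 e4 by simp
qed

lemma mpc_inv:
  assumes a: "a \<in> carrier_vec 8" and D: "nz a * nz a + ns a * ns a \<noteq> 0"
  shows "is_clmp a ((1 / (nz a * nz a + ns a * ns a)) \<cdot>\<^sub>v cl_mult (cconj a) (Nv (nz a) (- ns a)))"
proof -
  define d where "d = nz a * nz a + ns a * ns a"
  define M where "M = Nv (nz a) (- ns a)"
  define x where "x = (1 / d) \<cdot>\<^sub>v cl_mult (cconj a) M"
  have xc: "x \<in> carrier_vec 8" by (simp add: x_def)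
  have dn: "d \<noteq> 0" using D by (simp add: d_def)
  have one: "(1 / d) \<cdot>\<^sub>v Nv d 0 = Nv 1 0" using dn by (simp add: Nv_smult)
  have ax: "cl_mult a x = Nv 1 0"
  proof -
    have "cl_mult a x = (1 / d) \<cdot>\<^sub>v cl_mult (cl_mult a (cconj a)) M"
      by (simp add: x_def cl_mult_smult_right cl_assoc)
    also have "\<dots> = (1 / d) \<cdot>\<^sub>v Nv d 0" by (simp add: a_cconj M_def Nv_mult d_def)
    finally show ?thesis using one by simp
  qed
  have xa: "cl_mult x a = Nv 1 0"
  proof -
    have "cl_mult x a = (1 / d) \<cdot>\<^sub>v cl_mult (cconj a) (cl_mult M a)"
      by (simp add: x_def cl_mult_smult_left cl_assoc)
    also have "\<dots> = (1 / d) \<cdot>\<^sub>v cl_mult (cl_mult (cconj a) a) M"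
      by (simp add: M_def Nv_central cl_assoc)
    also have "\<dots> = (1 / d) \<cdot>\<^sub>v Nv d 0" by (simp add: cconj_a M_def Nv_mult d_def)
    finally show ?thesis using one by simp
  qed
  have "is_clmp a x" unfolding is_clmp_def using xc ax xa a
    by (simp add: one_left prime_one)
  then show ?thesis unfolding x_def M_def d_def .
qed

definition mpc :: "real vec \<Rightarrow> real vec" where
  "mpc a = (if nz a = 0 \<and> ns a = 0 then (1 / (2 * nrm a)) \<cdot>\<^sub>v cl_prime a
     else (1 / (nz a * nz a + ns a * ns a)) \<cdot>\<^sub>v cl_mult (cconj a) (Nv (nz a) (- ns a)))"

lemma mpc_is: assumes a: "a \<in> carrier_vec 8" shows "is_clmp a (mpc a)"
proof (cases "nz a = 0 \<and> ns a = 0")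
  case True
  then show ?thesis unfolding mpc_def if_P[OF True] using mpc_rank1[OF a] by simp
next
  case False
  have s1: "0 \<le> nz a * nz a" and s2: "0 \<le> ns a * ns a" by simp_all
  have "nz a * nz a + ns a * ns a \<noteq> 0"
  proof
    assume "nz a * nz a + ns a * ns a = 0"
    then have "nz a * nz a = 0" "ns a * ns a = 0" using s1 s2 by linarith+
    then show False using False by simp
  qed
  then show ?thesis unfolding mpc_def if_not_P[OF False] by (rule mpc_inv[OF a])
qed

lemma cl_mp_eq: assumes a: "a \<in> carrier_vec 8" shows "cl_mp a = mpc a"
  unfolding cl_mp_def
proof (rule the_equality)
  show "mpc a \<in> carrier_vec 8 \<and> cl_mult (cl_mult a (mpc a)) a = a \<and> cl_mult (cl_mult (mpc a) a) (mpc a) = mpc a \<and>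
    cl_prime (cl_mult a (mpc a)) = cl_mult a (mpc a) \<and> cl_prime (cl_mult (mpc a) a) = cl_mult (mpc a) a"
    using mpc_is[OF a] unfolding is_clmp_def .
next
  fix x assume "x \<in> carrier_vec 8 \<and> cl_mult (cl_mult a x) a = a \<and> cl_mult (cl_mult x a) x = x \<and>
    cl_prime (cl_mult a x) = cl_mult a x \<and> cl_prime (cl_mult x a) = cl_mult x a"
  then have "is_clmp a x" unfolding is_clmp_def .
  then show "x = mpc a" using clmp_unique mpc_is[OF a] by blast
qed

definition LM :: "real vec \<Rightarrow> real mat" where
  "LM a = mat 8 8 (\<lambda>(r, t). \<Sum>s<8. if xor s t = r then clsign s t * a $ s else 0)"
definition RM :: "real vec \<Rightarrow> real mat" where
  "RM a = mat 8 8 (\<lambda>(r, s). \<Sum>t<8. if xor s t = r then clsign s t * a $ t else 0)"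

lemma LM_carrier[simp]: "LM a \<in> carrier_mat 8 8" "dim_row (LM a) = 8" "dim_col (LM a) = 8"
  by (auto simp: LM_def)
lemma RM_carrier[simp]: "RM a \<in> carrier_mat 8 8" "dim_row (RM a) = 8" "dim_col (RM a) = 8"
  by (auto simp: RM_def)

lemma LM_vec: assumes x: "x \<in> carrier_vec 8" shows "LM a *\<^sub>v x = cl_mult a x"
proof (rule eq_vecI)
  fix i assume "i < dim_vec (cl_mult a x)"
  then have i: "i < 8" by simp
  have dx: "dim_vec x = 8" using x by simp
  from i show "(LM a *\<^sub>v x) $ i = cl_mult a x $ i"
    by (rule less8_cases; simp add: LM_def cl_mult_def scalar_prod_def dx atLeast0LessThan sum8
        clsign_tab clsign_tab[unfolded One_nat_def]; simp add: algebra_simps)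
qed simp

lemma RM_vec: assumes x: "x \<in> carrier_vec 8" shows "RM a *\<^sub>v x = cl_mult x a"
proof (rule eq_vecI)
  fix i assume "i < dim_vec (cl_mult x a)"
  then have i: "i < 8" by simp
  have dx: "dim_vec x = 8" using x by simp
  from i show "(RM a *\<^sub>v x) $ i = cl_mult x a $ i"
    by (rule less8_cases; simp add: RM_def cl_mult_def scalar_prod_def dx atLeast0LessThan sum8
        clsign_tab clsign_tab[unfolded One_nat_def]; simp add: algebra_simps)
qed simp

lemma mat_eq_by_vec:
  fixes A B :: "real mat"
  assumes A: "A \<in> carrier_mat n m" and B: "B \<in> carrier_mat n m"
    and e: "\<And>x. x \<in> carrier_vec m \<Longrightarrow> A *\<^sub>v x = B *\<^sub>v x"
  shows "A = B"
proof (rule eq_matI)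
  fix i j assume i: "i < dim_row B" and j: "j < dim_col B"
  have i': "i < n" and j': "j < m" using i j B by auto
  have "A $$ (i, j) = (A *\<^sub>v unit_vec m j) $ i" using A i' j' by simp
  also have "\<dots> = (B *\<^sub>v unit_vec m j) $ i" using e[of "unit_vec m j"] by simp
  also have "\<dots> = B $$ (i, j)" using B i' j' by simp
  finally show "A $$ (i, j) = B $$ (i, j)" .
qed (use A B in auto)

lemma Lmat_eq: "Lmat a = LM a"
  unfolding Lmat_def
proof (rule the_equality)
  show "LM a \<in> carrier_mat 8 8 \<and> (\<forall>x\<in>carrier_vec 8. LM a *\<^sub>v x = cl_mult a x)"
    by (simp add: LM_vec)
next
  fix M assume M: "M \<in> carrier_mat 8 8 \<and> (\<forall>x\<in>carrier_vec 8. M *\<^sub>v x = cl_mult a x)"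
  show "M = LM a"
    by (rule mat_eq_by_vec[of _ 8 8]) (use M in \<open>auto simp: LM_vec\<close>)
qed

lemma Rmat_eq: "Rmat a = RM a"
  unfolding Rmat_def
proof (rule the_equality)
  show "RM a \<in> carrier_mat 8 8 \<and> (\<forall>x\<in>carrier_vec 8. RM a *\<^sub>v x = cl_mult x a)"
    by (simp add: RM_vec)
next
  fix M assume M: "M \<in> carrier_mat 8 8 \<and> (\<forall>x\<in>carrier_vec 8. M *\<^sub>v x = cl_mult x a)"
  show "M = RM a"
    by (rule mat_eq_by_vec[of _ 8 8]) (use M in \<open>auto simp: RM_vec\<close>)
qed

lemma LM_mult: "LM (cl_mult a b) = LM a * LM b"
proof (rule mat_eq_by_vec[of _ 8 8])
  fix x :: "real vec" assume x: "x \<in> carrier_vec 8"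
  have "(LM a * LM b) *\<^sub>v x = LM a *\<^sub>v (LM b *\<^sub>v x)"
    by (rule assoc_mult_mat_vec[OF LM_carrier(1) LM_carrier(1) x])
  also have "\<dots> = cl_mult a (cl_mult b x)" using x by (simp add: LM_vec)
  finally show "LM (cl_mult a b) *\<^sub>v x = (LM a * LM b) *\<^sub>v x" using x by (simp add: LM_vec cl_assoc)
qed (auto intro: mult_carrier_mat[OF LM_carrier(1) LM_carrier(1)])

lemma RM_mult: "RM (cl_mult a b) = RM b * RM a"
proof (rule mat_eq_by_vec[of _ 8 8])
  fix x :: "real vec" assume x: "x \<in> carrier_vec 8"
  have "(RM b * RM a) *\<^sub>v x = RM b *\<^sub>v (RM a *\<^sub>v x)"
    by (rule assoc_mult_mat_vec[OF RM_carrier(1) RM_carrier(1) x])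
  also have "\<dots> = cl_mult (cl_mult x a) b" using x by (simp add: RM_vec)
  finally show "RM (cl_mult a b) *\<^sub>v x = (RM b * RM a) *\<^sub>v x" using x by (simp add: RM_vec cl_assoc)
qed (auto intro: mult_carrier_mat[OF RM_carrier(1) RM_carrier(1)])

lemma LM_prime: "LM (cl_prime a) = transpose_mat (LM a)"
proof (rule eq_matI)
  fix i j assume "i < dim_row (transpose_mat (LM a))" "j < dim_col (transpose_mat (LM a))"
  then have i: "i < 8" and j: "j < 8" by auto
  show "LM (cl_prime a) $$ (i, j) = transpose_mat (LM a) $$ (i, j)"
    by (rule less8_cases[OF i]; rule less8_cases[OF j]; simp add: LM_def sum8 cl_prime_def
        clsign_tab clsign_tab[unfolded One_nat_def] prime_sign_tab prime_sign_tab[unfolded One_nat_def])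
qed auto

lemma RM_prime: "RM (cl_prime a) = transpose_mat (RM a)"
proof (rule eq_matI)
  fix i j assume "i < dim_row (transpose_mat (RM a))" "j < dim_col (transpose_mat (RM a))"
  then have i: "i < 8" and j: "j < 8" by auto
  show "RM (cl_prime a) $$ (i, j) = transpose_mat (RM a) $$ (i, j)"
    by (rule less8_cases[OF i]; rule less8_cases[OF j]; simp add: RM_def sum8 cl_prime_def
        clsign_tab clsign_tab[unfolded One_nat_def] prime_sign_tab prime_sign_tab[unfolded One_nat_def])
qed auto

lemma matmp_unique:
  fixes A X Y :: "real mat"
  assumes cA: "A \<in> carrier_mat n n" and cX: "X \<in> carrier_mat n n" and cY: "Y \<in> carrier_mat n n"
    and h1: "A * X * A = A" and h2: "X * A * X = X"
    and h3: "transpose_mat (A * X) = A * X" and h4: "transpose_mat (X * A) = X * A"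
    and g1: "A * Y * A = A" and g2: "Y * A * Y = Y"
    and g3: "transpose_mat (A * Y) = A * Y" and g4: "transpose_mat (Y * A) = Y * A"
  shows "X = Y"
proof -
  have mc: "\<And>P Q. P \<in> carrier_mat n n \<Longrightarrow> Q \<in> carrier_mat n n \<Longrightarrow> P * Q \<in> carrier_mat n n"
    by (rule mult_carrier_mat)
  have tc: "\<And>P. P \<in> carrier_mat n n \<Longrightarrow> transpose_mat P \<in> carrier_mat n n" by simp
  have S: "\<And>P Q R. P \<in> carrier_mat n n \<Longrightarrow> Q \<in> carrier_mat n n \<Longrightarrow> R \<in> carrier_mat n n \<Longrightarrow>
    P * Q * R = P * (Q * R)" by (rule assoc_mult_mat)
  have T: "\<And>P Q :: real mat. P \<in> carrier_mat n n \<Longrightarrow> Q \<in> carrier_mat n n \<Longrightarrow>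
    transpose_mat (P * Q) = transpose_mat Q * transpose_mat P" by (rule transpose_mult)
  note cs = cA cX cY mc tc
  have A1: "transpose_mat A = transpose_mat A * (A * Y)"
  proof -
    have "transpose_mat A = transpose_mat (A * Y * A)" using g1 by simp
    also have "\<dots> = transpose_mat A * transpose_mat (A * Y)" by (simp add: T cs)
    also have "\<dots> = transpose_mat A * (A * Y)" using g3 by simp
    finally show ?thesis .
  qed
  have A2: "transpose_mat A = (X * A) * transpose_mat A"
  proof -
    have "transpose_mat A = transpose_mat (A * (X * A))" using h1 by (simp add: S cs)
    also have "\<dots> = transpose_mat (X * A) * transpose_mat A" by (simp add: T cs)
    also have "\<dots> = (X * A) * transpose_mat A" using h4 by simp
    finally show ?thesis .
  qed
  have XX: "X = X * (A * Y)"
  proof -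
    have "X = X * transpose_mat (A * X)" using h2 h3 by (simp add: S cs)
    also have "\<dots> = X * (transpose_mat X * transpose_mat A)" by (simp add: T cs)
    also have "\<dots> = X * (transpose_mat X * (transpose_mat A * (A * Y)))"
      by (rule arg_cong[where f="\<lambda>z. X * (transpose_mat X * z)"]) (rule A1)
    also have "\<dots> = X * (transpose_mat (A * X) * (A * Y))" by (simp add: T S cs)
    also have "\<dots> = X * ((A * X) * (A * Y))" using h3 by simp
    also have "\<dots> = (X * (A * X)) * (A * Y)" by (simp add: S cs)
    also have "\<dots> = X * (A * Y)" using h2 by (simp add: S cs)
    finally show ?thesis .
  qed
  have YY: "Y = X * (A * Y)"
  proof -
    have "Y = transpose_mat (Y * A) * Y" using g2 g4 by simp
    also have "\<dots> = (transpose_mat A * transpose_mat Y) * Y" by (simp add: T cs)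
    also have "\<dots> = (((X * A) * transpose_mat A) * transpose_mat Y) * Y"
      by (rule arg_cong[where f="\<lambda>z. (z * transpose_mat Y) * Y"]) (rule A2)
    also have "\<dots> = (X * A) * (transpose_mat (Y * A) * Y)" by (simp add: T S cs)
    also have "\<dots> = (X * A) * ((Y * A) * Y)" using g4 by simp
    also have "\<dots> = X * (A * Y)" using g2 by (simp add: S cs)
    finally show ?thesis .
  qed
  from XX YY show ?thesis by simp
qed

lemma LM_mp: assumes x: "is_clmp a x" shows "mat_mp (LM a) = LM x"
proof -
  from x have h1: "cl_mult (cl_mult a x) a = a" and h2: "cl_mult (cl_mult x a) x = x"
    and h3: "cl_prime (cl_mult a x) = cl_mult a x" and h4: "cl_prime (cl_mult x a) = cl_mult x a"
    unfolding is_clmp_def by auto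
  have P1: "LM a * LM x * LM a = LM a" using h1 by (simp add: LM_mult[symmetric])
  have P2: "LM x * LM a * LM x = LM x" using h2 by (simp add: LM_mult[symmetric])
  have P3: "transpose_mat (LM a * LM x) = LM a * LM x"
    by (simp add: LM_mult[symmetric] LM_prime[symmetric] h3)
  have P4: "transpose_mat (LM x * LM a) = LM x * LM a"
    by (simp add: LM_mult[symmetric] LM_prime[symmetric] h4)
  show ?thesis
    unfolding mat_mp_def
  proof (rule the_equality)
    show "LM x \<in> carrier_mat (dim_col (LM a)) (dim_row (LM a)) \<and> LM a * LM x * LM a = LM a \<and>
      LM x * LM a * LM x = LM x \<and> (LM a * LM x)\<^sup>T = LM a * LM x \<and> (LM x * LM a)\<^sup>T = LM x * LM a"
      using P1 P2 P3 P4 by simp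
  next
    fix X assume X: "X \<in> carrier_mat (dim_col (LM a)) (dim_row (LM a)) \<and> LM a * X * LM a = LM a \<and>
      X * LM a * X = X \<and> (LM a * X)\<^sup>T = LM a * X \<and> (X * LM a)\<^sup>T = X * LM a"
    show "X = LM x"
      by (rule matmp_unique[of "LM a" 8]) (use X P1 P2 P3 P4 in auto)
  qed
qed

lemma RM_mp: assumes x: "is_clmp a x" shows "mat_mp (RM a) = RM x"
proof -
  from x have h1: "cl_mult a (cl_mult x a) = a" and h2: "cl_mult x (cl_mult a x) = x"
    and h3: "cl_prime (cl_mult a x) = cl_mult a x" and h4: "cl_prime (cl_mult x a) = cl_mult x a"
    unfolding is_clmp_def by (auto simp: cl_assoc)
  have P1: "RM a * RM x * RM a = RM a" using h1 by (simp add: RM_mult[symmetric])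
  have P2: "RM x * RM a * RM x = RM x" using h2 by (simp add: RM_mult[symmetric])
  have P3: "transpose_mat (RM a * RM x) = RM a * RM x"
    by (simp add: RM_mult[symmetric] RM_prime[symmetric] h4)
  have P4: "transpose_mat (RM x * RM a) = RM x * RM a"
    by (simp add: RM_mult[symmetric] RM_prime[symmetric] h3)
  show ?thesis
    unfolding mat_mp_def
  proof (rule the_equality)
    show "RM x \<in> carrier_mat (dim_col (RM a)) (dim_row (RM a)) \<and> RM a * RM x * RM a = RM a \<and>
      RM x * RM a * RM x = RM x \<and> (RM a * RM x)\<^sup>T = RM a * RM x \<and> (RM x * RM a)\<^sup>T = RM x * RM a"
      using P1 P2 P3 P4 by simp
  next
    fix X assume X: "X \<in> carrier_mat (dim_col (RM a)) (dim_row (RM a)) \<and> RM a * X * RM a = RM a \<and>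
      X * RM a * X = X \<and> (RM a * X)\<^sup>T = RM a * X \<and> (X * RM a)\<^sup>T = X * RM a"
    show "X = RM x"
      by (rule matmp_unique[of "RM a" 8]) (use X P1 P2 P3 P4 in auto)
  qed
qed

theorem proposition3p2:
  fixes a :: "real vec"
  assumes "a \<in> carrier_vec 8"
  shows "Lmat (cl_mp a) = mat_mp (Lmat a) \<and> Rmat (cl_mp a) = mat_mp (Rmat a)"
proof -
  have x: "is_clmp a (mpc a)" using mpc_is[OF assms] .
  have e: "cl_mp a = mpc a" using cl_mp_eq[OF assms] .
  show ?thesis unfolding e Lmat_eq Rmat_eq using LM_mp[OF x] RM_mp[OF x] by simp
qed

end
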